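(* Let $w:2^{[m]}\to\mathbb{R}_{\ge0}$ be additive, and let $\mathcal P=(P_1,\dots,P_n)$ and $\mathcal Q=(Q_1,\dots,Q_n)$ be two $n$-partitions of $[m]$ that are both $\mathrm{EF1}$ with respect to $w$. Then the sequence $(w(P_i))_{i=1}^n$ $\tfrac12$-majorizes the sequence $(w(Q_i))_{i=1}^n$.
   Context: $w$ additive means $w(S)=\sum_{g\in S}w(g)$. An $n$-partition $(S_1,\dots,S_n)$ of $[m]$ (parts may be empty) is $\mathrm{EF1}$ with respect to $w$ if for all $i,j\in[n]$ with $S_j\ne\emptyset$ there is $g\in S_j$ with $w(S_i)\ge w(S_j)-w(g)$. For $\beta\in\mathbb{R}_{\ge0}$, a sequence $(x_i)_{i=1}^n$ $\beta$-majorizes $(y_i)_{i=1}^n$ if $\sum_{i=1}^k x_{(i)}\ge\beta\sum_{i=1}^k y_{(i)}$ for all $1\le k\le n-1$ and $\sum_{i=1}^n x_i=\sum_{i=1}^n y_i$, where $x_{(i)}$, $y_{(i)}$ denote the $i$-th largest entries. *)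

theory Defs
  imports Complex_Main
begin

text \<open>Goods are [m] = {1..m}. A valuation w is given by nonnegative item weights;
  the additive set function is w(S) = sum w S. Parts of an n-partition are indexed by 0..<n.\<close>

definition add_val :: "(nat \<Rightarrow> real) \<Rightarrow> nat set \<Rightarrow> real" where
  "add_val w S = (\<Sum>g\<in>S. w g)"

definition is_partition :: "nat \<Rightarrow> nat \<Rightarrow> (nat \<Rightarrow> nat set) \<Rightarrow> bool" where
  "is_partition n m P \<longleftrightarrow>
     (\<Union>i\<in>{0..<n}. P i) = {1..m} \<and>
     (\<forall>i<n. \<forall>j<n. i \<noteq> j \<longrightarrow> P i \<inter> P j = {})"

definition EF1 :: "(nat \<Rightarrow> real) \<Rightarrow> nat \<Rightarrow> (nat \<Rightarrow> nat set) \<Rightarrow> bool" where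
  "EF1 w n P \<longleftrightarrow>
     (\<forall>i<n. \<forall>j<n. P j \<noteq> {} \<longrightarrow>
        (\<exists>g\<in>P j. add_val w (P i) \<ge> add_val w (P j) - w g))"

text \<open>The i-th largest entry of xs is (rev (sort xs)) ! (i-1).\<close>
definition sorted_desc :: "real list \<Rightarrow> real list" where
  "sorted_desc xs = rev (sort xs)"

definition beta_majorizes :: "real \<Rightarrow> real list \<Rightarrow> real list \<Rightarrow> bool" where
  "beta_majorizes \<beta> xs ys \<longleftrightarrow>
     length xs = length ys \<and>
     (\<forall>k. 1 \<le> k \<and> k \<le> length xs - 1 \<longrightarrow>
        sum_list (take k (sorted_desc xs)) \<ge> \<beta> * sum_list (take k (sorted_desc ys))) \<and>
     sum_list xs = sum_list ys"

end

theory Submission imports Defs "HOL-Combinatorics.Permutations" begin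

lemma top_set:
  fixes f :: "nat \<Rightarrow> real"
  assumes "k \<le> n"
  shows "\<exists>T \<subseteq> {0..<n}. card T = k \<and>
     sum_list (take k (sorted_desc (map f [0..<n]))) = sum f T \<and>
     (\<forall>i\<in>T. \<forall>j\<in>{0..<n}-T. f j \<le> f i)"
proof -
  define xs where "xs = map f [0..<n]"
  define ys where "ys = sorted_desc xs"
  have m: "mset ys = mset xs" by (simp add: ys_def sorted_desc_def)
  have ly: "length ys = n" "length xs = n" by (simp_all add: ys_def xs_def sorted_desc_def)
  obtain p where p: "p permutes {..<length xs}" "permute_list p xs = ys"
    using mset_eq_permutation[OF m] by blast
  have pn: "p permutes {..<n}" using p ly by simp
  have ysn: "ys ! i = f (p i)" if "i < n" for i
  proof -
    have "ys ! i = xs ! p i" using permute_list_nth[OF p(1)] p(2) that ly by metis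
    moreover have "p i < n" using permutes_in_image[OF pn] that by simp
    ultimately show ?thesis by (simp add: xs_def)
  qed
  have tk: "take k ys = map (\<lambda>i. f (p i)) [0..<k]"
    by (rule nth_equalityI) (use assms ly ysn in auto)
  have inj: "inj_on p {0..<k}" using permutes_inj[OF pn] by (auto intro: inj_on_subset)
  define T where "T = p ` {0..<k}"
  have sumT: "sum_list (take k ys) = sum f T"
  proof -
    have "sum_list (take k ys) = sum (\<lambda>i. f (p i)) {0..<k}"
      unfolding tk by (simp add: sum_set_upt_conv_sum_list_nat[symmetric])
    also have "\<dots> = sum f T" unfolding T_def by (simp add: sum.reindex[OF inj])
    finally show ?thesis .
  qed
  have sub: "T \<subseteq> {0..<n}"
  proof -
    have "p ` {0..<k} \<subseteq> p ` {..<n}" using assms by (intro image_mono) auto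
    also have "p ` {..<n} = {..<n}" by (rule permutes_image[OF pn])
    finally show ?thesis unfolding T_def by auto
  qed
  have card: "card T = k" unfolding T_def using card_image[OF inj] by simp
  have srt: "ys ! b \<le> ys ! a" if "a \<le> b" "b < n" for a b
  proof -
    have s: "sorted (sort xs)" by simp
    have l: "length (sort xs) = n" using ly by simp
    have "ys ! a = sort xs ! (n - Suc a)" "ys ! b = sort xs ! (n - Suc b)"
      using that l by (auto simp: ys_def sorted_desc_def rev_nth)
    moreover have "sort xs ! (n - Suc b) \<le> sort xs ! (n - Suc a)"
      using sorted_nth_mono[OF s, of "n - Suc b" "n - Suc a"] that l by simp
    ultimately show ?thesis by simp
  qed
  have dom: "\<forall>i\<in>T. \<forall>j\<in>{0..<n}-T. f j \<le> f i"
  proof (intro ballI)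
    fix i j assume i: "i \<in> T" and j: "j \<in> {0..<n} - T"
    obtain i' where i': "i' < k" "i = p i'" using i T_def by auto
    have "j \<in> {..<n}" using j by simp
    then have "j \<in> p ` {..<n}" using permutes_image[OF pn] by simp
    then obtain j' where j': "j' < n" "j = p j'" by auto
    have "j' \<ge> k"
    proof (rule ccontr)
      assume "\<not> k \<le> j'"
      then have "j \<in> T" using j' unfolding T_def by auto
      then show False using j by simp
    qed
    then have "ys ! j' \<le> ys ! i'" using srt[of i' j'] i' j' by simp
    moreover have "ys ! i' = f i" using ysn[of i'] i' assms by simp
    moreover have "ys ! j' = f j" using ysn[of j'] j' by simp
    ultimately show "f j \<le> f i" by simp
  qed
  have "sum_list (take k (sorted_desc (map f [0..<n]))) = sum f T" using sumT unfolding ys_def xs_def .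
  then show ?thesis using sub card dom by blast
qed


lemma dom_le:
  fixes f :: "nat \<Rightarrow> real"
  assumes T: "T \<subseteq> {0..<n}" and S: "S \<subseteq> {0..<n}" and c: "card S \<le> card T"
    and nn: "\<And>i. i < n \<Longrightarrow> f i \<ge> 0"
    and dom: "\<forall>i\<in>T. \<forall>j\<in>{0..<n}-T. f j \<le> f i"
  shows "sum f S \<le> sum f T"
proof -
  have fS: "finite S" "finite T" using T S finite_subset by auto
  define A where "A = S - T"
  define B where "B = T - S"
  have fA: "finite A" "finite B" using fS by (auto simp: A_def B_def)
  have cS: "card S = card (S \<inter> T) + card A" unfolding A_def
    using card_Int_Diff[OF fS(1), of T] by simp
  have cT: "card T = card (S \<inter> T) + card B" unfolding B_def
    using card_Int_Diff[OF fS(2), of S] by (simp add: Int_commute)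
  have cAB: "card A \<le> card B" using c cS cT by simp
  have sS: "sum f S = sum f (S \<inter> T) + sum f A" unfolding A_def
    using sum.Int_Diff[OF fS(1), of f T] by simp
  have sT: "sum f T = sum f (S \<inter> T) + sum f B" unfolding B_def
    using sum.Int_Diff[OF fS(2), of f S] by (simp add: Int_commute)
  have "sum f A \<le> sum f B"
  proof (cases "A = {}")
    case True
    then show ?thesis using nn T by (auto simp: B_def intro!: sum_nonneg)
  next
    case False
    then have "B \<noteq> {}" using cAB fA by auto
    define cc where "cc = Min (f ` B)"
    have ccin: "cc \<in> f ` B" unfolding cc_def using \<open>B \<noteq> {}\<close> fA by auto
    then obtain b where b: "b \<in> B" "f b = cc" by auto
    have ccnn: "cc \<ge> 0" using b nn T by (auto simp: B_def)
    have "sum f A \<le> sum (\<lambda>_. cc) A"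
    proof (rule sum_mono)
      fix a assume "a \<in> A"
      then show "f a \<le> cc" using dom b S by (auto simp: A_def B_def)
    qed
    also have "\<dots> = card A * cc" by simp
    also have "\<dots> \<le> card B * cc" using cAB ccnn by (simp add: mult_right_mono)
    also have "\<dots> = sum (\<lambda>_. cc) B" by simp
    also have "\<dots> \<le> sum f B"
      by (rule sum_mono) (use fA cc_def in auto)
    finally show ?thesis .
  qed
  then show ?thesis using sS sT by linarith
qed

lemma avg:
  fixes f :: "nat \<Rightarrow> real"
  assumes T: "T \<subseteq> {0..<n}" and card: "card T = k"
    and dom: "\<forall>i\<in>T. \<forall>j\<in>{0..<n}-T. f j \<le> f i"
  shows "real k * sum f {0..<n} \<le> real n * sum f T"
proof -
  define C where "C = {0..<n} - T"
  have fT: "finite T" using T finite_subset by auto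
  have cC: "card C = n - k" unfolding C_def using card_Diff_subset[OF fT T] card by simp
  have kn: "k \<le> n" using card_mono[OF _ T] card by simp
  have tot: "sum f {0..<n} = sum f T + sum f C" unfolding C_def
    using sum.subset_diff[OF T, of f] by simp
  have "real k * sum f C = (\<Sum>j\<in>C. \<Sum>i\<in>T. f j)" using card by (simp add: sum_distrib_left mult.commute)
  also have "\<dots> \<le> (\<Sum>j\<in>C. \<Sum>i\<in>T. f i)"
    by (intro sum_mono) (use dom C_def in auto)
  also have "\<dots> = real (n - k) * sum f T" using cC by simp
  finally have 1: "real k * sum f C \<le> real (n - k) * sum f T" .
  have nk: "real n = real k + real (n - k)" using kn by simp
  have 2: "real n * sum f T = real k * sum f T + real (n-k) * sum f T"
    by (subst nk) (rule distrib_right)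
  have 3: "real k * sum f {0..<n} = real k * sum f T + real k * sum f C" unfolding tot by (rule distrib_left)
  show ?thesis using 1 2 3 by linarith
qed

theorem lemma2:
  fixes w :: "nat \<Rightarrow> real" and n m :: nat and P Q :: "nat \<Rightarrow> nat set"
  assumes w_nonneg: "\<And>g. g \<in> {1..m} \<Longrightarrow> w g \<ge> 0"
    and P_part: "is_partition n m P" and Q_part: "is_partition n m Q"
    and P_EF1: "EF1 w n P" and Q_EF1: "EF1 w n Q"
  shows "beta_majorizes (1/2)
           (map (\<lambda>i. add_val w (P i)) [0..<n])
           (map (\<lambda>i. add_val w (Q i)) [0..<n])"
proof -
  define a where "a = (\<lambda>i. add_val w (P i))"
  define b where "b = (\<lambda>i. add_val w (Q i))"
  have Psub: "P i \<subseteq> {1..m}" if "i < n" for i using P_part that unfolding is_partition_def by auto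
  have Qsub: "Q i \<subseteq> {1..m}" if "i < n" for i using Q_part that unfolding is_partition_def by auto
  have Pfin: "finite (P i)" if "i < n" for i using Psub[OF that] finite_subset by blast
  have Qfin: "finite (Q i)" if "i < n" for i using Qsub[OF that] finite_subset by blast
  have Pdisj: "P i \<inter> P j = {}" if "i < n" "j < n" "i \<noteq> j" for i j
    using P_part that unfolding is_partition_def by auto
  have Qdisj: "Q i \<inter> Q j = {}" if "i < n" "j < n" "i \<noteq> j" for i j
    using Q_part that unfolding is_partition_def by auto
  have Pun: "(\<Union>i\<in>{0..<n}. P i) = {1..m}" using P_part unfolding is_partition_def by auto
  have Qun: "(\<Union>i\<in>{0..<n}. Q i) = {1..m}" using Q_part unfolding is_partition_def by auto
  have ann: "a i \<ge> 0" if "i < n" for i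
    unfolding a_def add_val_def using Psub[OF that] w_nonneg by (auto intro!: sum_nonneg)
  have bnn: "b i \<ge> 0" if "i < n" for i
    unfolding b_def add_val_def using Qsub[OF that] w_nonneg by (auto intro!: sum_nonneg)
  have sumPR: "sum w (\<Union>i\<in>R. P i) = sum a R" if "R \<subseteq> {0..<n}" for R
  proof -
    have "finite R" using that finite_subset by blast
    moreover have "\<forall>i\<in>R. finite (P i)" using that Pfin by auto
    moreover have "\<forall>i\<in>R. \<forall>j\<in>R. i \<noteq> j \<longrightarrow> P i \<inter> P j = {}" using that Pdisj by (meson atLeastLessThan_iff subsetD)
    ultimately show ?thesis unfolding a_def add_val_def by (rule sum.UNION_disjoint)
  qed
  have totP: "sum a {0..<n} = sum w {1..m}" using sumPR[of "{0..<n}"] Pun by simp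
  have totQ: "sum b {0..<n} = sum w {1..m}"
  proof -
    have "\<forall>i\<in>{0..<n}. finite (Q i)" using Qfin by auto
    moreover have "\<forall>i\<in>{0..<n}. \<forall>j\<in>{0..<n}. i \<noteq> j \<longrightarrow> Q i \<inter> Q j = {}" using Qdisj by simp
    ultimately have "sum w (\<Union>i\<in>{0..<n}. Q i) = sum b {0..<n}" unfolding b_def add_val_def
      by (intro sum.UNION_disjoint) auto
    then show ?thesis using Qun by simp
  qed
  have main: "(1/2) * sum_list (take k (sorted_desc (map b [0..<n])))
      \<le> sum_list (take k (sorted_desc (map a [0..<n])))" if k: "1 \<le> k" "k \<le> n - 1" for k
  proof -
    have kn: "k \<le> n" "0 < n" using k by auto
    obtain TP where TP: "TP \<subseteq> {0..<n}" "card TP = k"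
      "sum_list (take k (sorted_desc (map a [0..<n]))) = sum a TP"
      "\<forall>i\<in>TP. \<forall>j\<in>{0..<n}-TP. a j \<le> a i"
      using top_set[OF kn(1), of a] by blast
    obtain TQ where TQ: "TQ \<subseteq> {0..<n}" "card TQ = k"
      "sum_list (take k (sorted_desc (map b [0..<n]))) = sum b TQ"
      using top_set[OF kn(1), of b] by blast
    have fTQ: "finite TQ" using TQ(1) finite_subset by blast
    define bt where "bt = Min (b ` {0..<n})"
    have "bt \<in> b ` {0..<n}" unfolding bt_def using kn by auto
    then obtain t where t: "t < n" "b t = bt" by auto
    have btle: "bt \<le> b i" if "i < n" for i unfolding bt_def using that by auto
    have btnn: "bt \<ge> 0" using bnn t by auto
    have "real n * bt \<le> sum b {0..<n}"
    proof -
      have "sum (\<lambda>_. bt) {0..<n} \<le> sum b {0..<n}" by (rule sum_mono) (use btle in auto)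
      then show ?thesis by simp
    qed
    then have nb: "real n * bt \<le> sum a {0..<n}" using totP totQ by simp
    have av: "real k * sum a {0..<n} \<le> real n * sum a TP" using avg[OF TP(1,2,4)] .
    have "real n * (real k * bt) = real k * (real n * bt)" by simp
    also have "\<dots> \<le> real k * sum a {0..<n}" using nb by (simp add: mult_left_mono)
    also have "\<dots> \<le> real n * sum a TP" by (rule av)
    finally have "real n * (real k * bt) \<le> real n * sum a TP" .
    then have kbt: "real k * bt \<le> sum a TP" using kn(2) by (simp add: mult_le_cancel_left_pos)
    define g where "g = (\<lambda>i. SOME x. x \<in> Q i \<and> b t \<ge> b i - w x)"
    have gQ: "g i \<in> Q i \<and> b t \<ge> b i - w (g i)" if "i < n" "Q i \<noteq> {}" for i
    proof -
      have "\<exists>x. x \<in> Q i \<and> b t \<ge> b i - w x"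
        using Q_EF1 t(1) that unfolding EF1_def b_def by blast
      then show ?thesis unfolding g_def by (rule someI_ex)
    qed
    define I where "I = {i\<in>TQ. Q i \<noteq> {}}"
    have IT: "I \<subseteq> TQ" unfolding I_def by auto
    have fI: "finite I" using fTQ IT finite_subset by blast
    have cI: "card I \<le> k" using card_mono[OF fTQ IT] TQ(2) by simp
    have sTQ: "sum b TQ = sum b I"
    proof -
      have "sum b TQ = sum b I + sum b (TQ - I)" using sum.subset_diff[OF IT fTQ, of b] by linarith
      moreover have "sum b (TQ - I) = 0" by (rule sum.neutral) (auto simp: I_def b_def add_val_def)
      ultimately show ?thesis by simp
    qed
    have "sum b I \<le> sum (\<lambda>i. bt + w (g i)) I"
    proof (rule sum_mono)
      fix i assume "i \<in> I"
      then have "i < n" "Q i \<noteq> {}" using TQ(1) by (auto simp: I_def)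
      then have "b t \<ge> b i - w (g i)" using gQ by blast
      then show "b i \<le> bt + w (g i)" using t by linarith
    qed
    also have "\<dots> = real (card I) * bt + sum (\<lambda>i. w (g i)) I" by (simp add: sum.distrib)
    also have "\<dots> \<le> real k * bt + sum (\<lambda>i. w (g i)) I"
      using cI btnn by (simp add: mult_right_mono)
    finally have bI: "sum b I \<le> real k * bt + sum (\<lambda>i. w (g i)) I" .
    have injg: "inj_on g I"
    proof (rule inj_onI)
      fix i j assume ij: "i \<in> I" "j \<in> I" "g i = g j"
      then have "i < n" "j < n" "Q i \<noteq> {}" "Q j \<noteq> {}" using TQ(1) by (auto simp: I_def)
      then have "g i \<in> Q i" "g j \<in> Q j" using gQ by auto
      moreover have "Q i \<inter> Q j = {}" if "i \<noteq> j" using Qdisj \<open>i < n\<close> \<open>j < n\<close> that by simp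
      ultimately show "i = j" using ij(3) by auto
    qed
    define X where "X = g ` I"
    have sX: "sum (\<lambda>i. w (g i)) I = sum w X" unfolding X_def using sum.reindex[OF injg, of w] by (simp add: comp_def)
    have Xsub: "X \<subseteq> {1..m}"
    proof
      fix x assume "x \<in> X"
      then obtain i where i: "i \<in> I" "x = g i" unfolding X_def by auto
      then have "i < n" "Q i \<noteq> {}" using TQ(1) by (auto simp: I_def)
      then show "x \<in> {1..m}" using gQ Qsub i by blast
    qed
    have fX: "finite X" unfolding X_def using fI by simp
    have cX: "card X \<le> k" unfolding X_def using card_image_le[OF fI] cI by (meson le_trans)
    define pidx where "pidx = (\<lambda>x. SOME j. j < n \<and> x \<in> P j)"
    have pidx: "pidx x < n \<and> x \<in> P (pidx x)" if "x \<in> {1..m}" for x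
    proof -
      have "x \<in> (\<Union>i\<in>{0..<n}. P i)" using that Pun by simp
      then have "\<exists>j. j < n \<and> x \<in> P j" by auto
      then show ?thesis unfolding pidx_def by (rule someI_ex)
    qed
    define R where "R = pidx ` X"
    have Rsub: "R \<subseteq> {0..<n}" unfolding R_def using pidx Xsub by auto
    have cR: "card R \<le> card TP" unfolding R_def using card_image_le[OF fX, of pidx] cX TP(2) by linarith
    have XU: "X \<subseteq> (\<Union>j\<in>R. P j)" unfolding R_def using pidx Xsub by blast
    have "sum w X \<le> sum w (\<Union>j\<in>R. P j)"
    proof (rule sum_mono2)
      show "finite (\<Union>j\<in>R. P j)" using Rsub Pfin finite_subset[OF Rsub] by auto
      show "X \<subseteq> (\<Union>j\<in>R. P j)" by (rule XU)
      show "0 \<le> w x" if xin: "x \<in> (\<Union>j\<in>R. P j) - X" for x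
      proof -
        obtain j where "j \<in> R" "x \<in> P j" using xin by auto
        then have "j < n" using Rsub by auto
        then have "x \<in> {1..m}" using Psub \<open>x \<in> P j\<close> by blast
        then show ?thesis by (rule w_nonneg)
      qed
    qed
    also have "\<dots> = sum a R" by (rule sumPR[OF Rsub])
    also have "\<dots> \<le> sum a TP" by (rule dom_le[OF TP(1) Rsub cR ann TP(4)])
    finally have "sum w X \<le> sum a TP" .
    then have "sum b TQ \<le> 2 * sum a TP" using sTQ bI sX kbt by linarith
    then show ?thesis using TP(3) TQ(3) by simp
  qed
  have sa: "sum_list (map a [0..<n]) = sum a {0..<n}"
    using sum_set_upt_conv_sum_list_nat[symmetric] by (simp only: atLeastLessThan_upt)
  have sb: "sum_list (map b [0..<n]) = sum b {0..<n}"
    using sum_set_upt_conv_sum_list_nat[symmetric] by (simp only: atLeastLessThan_upt)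
  have "beta_majorizes (1/2) (map a [0..<n]) (map b [0..<n])"
    unfolding beta_majorizes_def
  proof (intro conjI allI impI)
    show "length (map a [0..<n]) = length (map b [0..<n])" by simp
  next
    fix k assume k: "1 \<le> k \<and> k \<le> length (map a [0..<n]) - 1"
    then have "1 \<le> k" "k \<le> n - 1" by auto
    then show "1 / 2 * sum_list (take k (sorted_desc (map b [0..<n])))
         \<le> sum_list (take k (sorted_desc (map a [0..<n])))" by (rule main)
  next
    show "sum_list (map a [0..<n]) = sum_list (map b [0..<n])"
      using totP totQ sa sb by linarith
  qed
  then show ?thesis unfolding a_def b_def .
qed

end
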